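(* Let $P\in\mathcal I(n)$ be nonzero, write $P=S\cdot Q$, and let $K$ be the support of the Newton diagram of $Q$. (i) If $P$ is indecomposable, then $K$ is connected. (ii) The size of $K$ equals the p-degree of $P$.
   Context: $S(X)=X_0+X_1+\dots+X_n$. $\mathcal I(n)$ denotes the set of homogeneous polynomials $P\in\mathbb R[X_0,\dots,X_n]$ with $P(X)=0$ whenever $S(X)=0$ (such $P$ is divisible by $S$). The p-degree of $P$ is the smallest integer $d$ such that $P=X^\alpha R$ for some monomial $X^\alpha$ and some polynomial $R$ of degree $d$. $P\in\mathcal I(n)$ is indecomposable if one cannot write $P=P_1+P_2$ with $P_1,P_2\in\mathcal I(n)$ both nonzero and having no monomial in common. For nonzero $P$ of degree $d$ with $P=SQ$, the Newton diagram of $Q$ is the function $D\colon\mathbb Z^n\to\{0,P,N\}$ assigning to $m$ the value $P$, $0$, or $N$ according as the coefficient of $X_0^{d-1-|m|}X_1^{m_1}\cdots X_n^{m_n}$ in $Q$ is positive, zero (including when some exponent is negative), or negative; here $|m|=m_1+\dots+m_n$. Its support is $K=D^{-1}(\{P,N\})\subset\mathbb N_0^n$. With $e_1,\dots,e_n$ the standard basis, two distinct points $m,m'$ are adjacent if $m-m'\in\{\pm e_j\}\cup\{e_j-e_k: j\ne k\}$; $K$ is connected if any two points of $K$ are joined by a path of successively adjacent points of $K$. The size of $K$ is $k-|a|+1$ where $k=\max_{m\in K}|m|$ and $a_j=\min_{m\in K}m_j$. *)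

theory Defs
  imports Complex_Main "HOL-Library.Poly_Mapping"
begin

text \<open>Polynomials in R[X_0, X_1, ...] are finitely supported maps from monomials
(exponent vectors, nat =>0 nat) to real coefficients; a polynomial in
R[X_0,...,X_n] is one whose monomials only involve variables 0..n.\<close>

type_synonym mpoly = "(nat \<Rightarrow>\<^sub>0 nat) \<Rightarrow>\<^sub>0 real"

definition mdeg :: "(nat \<Rightarrow>\<^sub>0 nat) \<Rightarrow> nat" where
  "mdeg \<alpha> = (\<Sum>i\<in>Poly_Mapping.keys \<alpha>. Poly_Mapping.lookup \<alpha> i)"

definition tdeg :: "mpoly \<Rightarrow> nat" where
  "tdeg P = (if Poly_Mapping.keys P = {} then 0 else Max (mdeg ` Poly_Mapping.keys P))"

definition in_vars :: "nat \<Rightarrow> mpoly \<Rightarrow> bool" where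
  "in_vars n P \<longleftrightarrow> (\<forall>\<alpha>\<in>Poly_Mapping.keys P. Poly_Mapping.keys \<alpha> \<subseteq> {..n})"

definition homogeneous :: "mpoly \<Rightarrow> bool" where
  "homogeneous P \<longleftrightarrow> (\<exists>d. \<forall>\<alpha>\<in>Poly_Mapping.keys P. mdeg \<alpha> = d)"

definition peval :: "mpoly \<Rightarrow> (nat \<Rightarrow> real) \<Rightarrow> real" where
  "peval P x = (\<Sum>\<alpha>\<in>Poly_Mapping.keys P. Poly_Mapping.lookup P \<alpha> * (\<Prod>i\<in>Poly_Mapping.keys \<alpha>. x i ^ Poly_Mapping.lookup \<alpha> i))"

definition Xvar :: "nat \<Rightarrow> mpoly" where
  "Xvar i = Poly_Mapping.single (Poly_Mapping.single i 1) 1"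

definition Xmon :: "(nat \<Rightarrow>\<^sub>0 nat) \<Rightarrow> mpoly" where
  "Xmon \<alpha> = Poly_Mapping.single \<alpha> 1"

definition Spoly :: "nat \<Rightarrow> mpoly" where
  "Spoly n = (\<Sum>i\<le>n. Xvar i)"

definition In :: "nat \<Rightarrow> mpoly set" where
  "In n = {P. in_vars n P \<and> homogeneous P \<and>
              (\<forall>x::nat \<Rightarrow> real. (\<Sum>i\<le>n. x i) = 0 \<longrightarrow> peval P x = 0)}"

definition pdeg :: "mpoly \<Rightarrow> nat" where
  "pdeg P = (LEAST d. \<exists>\<alpha> R. P = Xmon \<alpha> * R \<and> tdeg R = d)"

definition indecomposable :: "nat \<Rightarrow> mpoly \<Rightarrow> bool" where
  "indecomposable n P \<longleftrightarrow> P \<in> In n \<and>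
     \<not> (\<exists>P1 P2. P1 \<in> In n \<and> P2 \<in> In n \<and> P1 \<noteq> 0 \<and> P2 \<noteq> 0 \<and>
              Poly_Mapping.keys P1 \<inter> Poly_Mapping.keys P2 = {} \<and> P = P1 + P2)"

text \<open>Points of Z^n / N_0^n are functions nat => nat (or int) supported on {1..n}.\<close>
definition absm :: "nat \<Rightarrow> (nat \<Rightarrow> nat) \<Rightarrow> nat" where
  "absm n m = (\<Sum>j=1..n. m j)"

text \<open>Support of the Newton diagram of Q (P = S*Q of degree d): the m in N_0^n
for which the coefficient of X_0^(d-1-|m|) X_1^m_1 ... X_n^m_n in Q is nonzero.\<close>
definition newton_support :: "nat \<Rightarrow> nat \<Rightarrow> mpoly \<Rightarrow> (nat \<Rightarrow> nat) set" where
  "newton_support n d Q = {m. (\<forall>j. j \<notin> {1..n} \<longrightarrow> m j = 0) \<and> absm n m + 1 \<le> d \<and>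
      Poly_Mapping.lookup Q (Abs_poly_mapping (\<lambda>j. if j = 0 then d - 1 - absm n m else m j)) \<noteq> 0}"

definition unitv :: "nat \<Rightarrow> nat \<Rightarrow> int" where
  "unitv j = (\<lambda>i. if i = j then 1 else 0)"

definition adjacent :: "nat \<Rightarrow> (nat \<Rightarrow> nat) \<Rightarrow> (nat \<Rightarrow> nat) \<Rightarrow> bool" where
  "adjacent n m m' \<longleftrightarrow> m \<noteq> m' \<and>
     (let v = (\<lambda>i. int (m i) - int (m' i)) in
       \<exists>j\<in>{1..n}. v = unitv j \<or> v = - unitv j \<or>
                  (\<exists>k\<in>{1..n}. j \<noteq> k \<and> v = unitv j - unitv k))"

definition connected_set :: "nat \<Rightarrow> (nat \<Rightarrow> nat) set \<Rightarrow> bool" where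
  "connected_set n K \<longleftrightarrow>
     (\<forall>a\<in>K. \<forall>b\<in>K. (\<lambda>x y. x \<in> K \<and> y \<in> K \<and> adjacent n x y)\<^sup>*\<^sup>* a b)"

definition size_set :: "nat \<Rightarrow> (nat \<Rightarrow> nat) set \<Rightarrow> int" where
  "size_set n K = int (Max (absm n ` K)) - int (\<Sum>j=1..n. Min ((\<lambda>m. m j) ` K)) + 1"

end

theory Submission
  imports Defs
begin

abbreviation lk :: "('a \<Rightarrow>\<^sub>0 'b::zero) \<Rightarrow> 'a \<Rightarrow> 'b" where "lk \<equiv> Poly_Mapping.lookup"
abbreviation ks :: "('a \<Rightarrow>\<^sub>0 'b::zero) \<Rightarrow> 'a set" where "ks \<equiv> Poly_Mapping.keys"

lemma lookup_mult_fin: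
  fixes f g :: mpoly
  shows "lk (f * g) k = (\<Sum>a\<in>ks f. lk f a * (\<Sum>b\<in>ks g. (lk g b when k = a + b)))"
proof -
  have inner: "(\<Sum>q. lk g q when k = l + q) = (\<Sum>b\<in>ks g. (lk g b when k = l + b))" for l
    by (rule Sum_any.expand_superset) (auto simp: in_keys_iff)
  have "lk (f * g) k = (\<Sum>l. lk f l * (\<Sum>b\<in>ks g. (lk g b when k = l + b)))"
    by (simp add: lookup_mult inner)
  also have "\<dots> = (\<Sum>a\<in>ks f. lk f a * (\<Sum>b\<in>ks g. (lk g b when k = a + b)))"
    by (rule Sum_any.expand_superset) (auto simp: in_keys_iff)
  finally show ?thesis .
qed

lemma lookup_mult_single:
  fixes R :: mpoly
  shows "lk (Poly_Mapping.single \<alpha> c * R) (\<alpha> + b) = c * lk R b"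
proof (cases "c = 0")
  case True then show ?thesis by simp
next
  case False
  have "lk (Poly_Mapping.single \<alpha> c * R) (\<alpha> + b) = c * (\<Sum>b'\<in>ks R. (lk R b' when \<alpha> + b = \<alpha> + b'))"
    using False by (simp add: lookup_mult_fin)
  also have "(\<Sum>b'\<in>ks R. (lk R b' when \<alpha> + b = \<alpha> + b')) = (\<Sum>b'\<in>ks R. if b' = b then lk R b else 0)"
    by (rule sum.cong) (auto simp: when_def)
  also have "\<dots> = lk R b" by (simp add: in_keys_iff)
  finally show ?thesis .
qed

lemma keys_mult_single:
  fixes R :: mpoly
  assumes "c \<noteq> 0"
  shows "ks (Poly_Mapping.single \<alpha> c * R) = (\<lambda>b. \<alpha> + b) ` ks R"
proof
  show "ks (Poly_Mapping.single \<alpha> c * R) \<subseteq> (\<lambda>b. \<alpha> + b) ` ks R"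
    using keys_mult[of "Poly_Mapping.single \<alpha> c" R] assms by auto
  show "(\<lambda>b. \<alpha> + b) ` ks R \<subseteq> ks (Poly_Mapping.single \<alpha> c * R)"
    using assms by (auto simp: in_keys_iff lookup_mult_single)
qed

lemma mdeg_superset:
  assumes "finite F" "ks \<alpha> \<subseteq> F"
  shows "mdeg \<alpha> = (\<Sum>i\<in>F. lk \<alpha> i)"
  unfolding mdeg_def
  by (rule sum.mono_neutral_left) (use assms in \<open>auto simp: in_keys_iff\<close>)

lemma mdeg_add: "mdeg (a + b) = mdeg a + mdeg b"
proof -
  let ?F = "ks a \<union> ks b"
  have "ks (a + b) \<subseteq> ?F" by (rule keys_add)
  then have "mdeg (a + b) = (\<Sum>i\<in>?F. lk (a+b) i)" by (intro mdeg_superset) auto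
  also have "\<dots> = (\<Sum>i\<in>?F. lk a i) + (\<Sum>i\<in>?F. lk b i)" by (simp add: lookup_add sum.distrib)
  also have "\<dots> = mdeg a + mdeg b" by (subst (1 2) mdeg_superset[of ?F]) auto
  finally show ?thesis .
qed

lemma mdeg_single [simp]: "mdeg (Poly_Mapping.single i k) = k"
  unfolding mdeg_def by (cases "k = 0") auto

lemma wmax_mult:
  fixes A B :: mpoly and w :: "(nat \<Rightarrow>\<^sub>0 nat) \<Rightarrow> int"
  assumes add: "\<And>a b. w (a + b) = w a + w b" and "A \<noteq> 0" "B \<noteq> 0"
  shows "\<exists>a\<in>ks A. \<exists>b\<in>ks B. a + b \<in> ks (A * B) \<and> (\<forall>a'\<in>ks A. w a' \<le> w a) \<and> (\<forall>b'\<in>ks B. w b' \<le> w b)"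
proof -
  define MA where "MA = Max (w ` ks A)"
  define MB where "MB = Max (w ` ks B)"
  define A0 where "A0 = {a\<in>ks A. w a = MA}"
  define B0 where "B0 = {b\<in>ks B. w b = MB}"
  have neA: "ks A \<noteq> {}" and neB: "ks B \<noteq> {}" using assms by auto
  have MAin: "MA \<in> w ` ks A" unfolding MA_def using neA by (intro Max_in) auto
  have MBin: "MB \<in> w ` ks B" unfolding MB_def using neB by (intro Max_in) auto
  have MAge: "\<And>a. a \<in> ks A \<Longrightarrow> w a \<le> MA" unfolding MA_def by auto
  have MBge: "\<And>b. b \<in> ks B \<Longrightarrow> w b \<le> MB" unfolding MB_def by auto
  have finA0: "finite A0" "A0 \<noteq> {}" unfolding A0_def using MAin by auto
  have finB0: "finite B0" "B0 \<noteq> {}" unfolding B0_def using MBin by auto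
  define a0 where "a0 = Max A0"
  define b0 where "b0 = Max B0"
  have a0: "a0 \<in> A0" unfolding a0_def using finA0 by (rule Max_in)
  have b0: "b0 \<in> B0" unfolding b0_def using finB0 by (rule Max_in)
  have a0le: "\<And>a. a \<in> A0 \<Longrightarrow> a \<le> a0" unfolding a0_def using finA0 by auto
  have b0le: "\<And>b. b \<in> B0 \<Longrightarrow> b \<le> b0" unfolding b0_def using finB0 by auto
  have uniq: "a = a0 \<and> b = b0" if "a \<in> ks A" "b \<in> ks B" "a0 + b0 = a + b" for a b
  proof -
    have "w a0 + w b0 = w a + w b" using that(3) add by metis
    moreover have "w a0 = MA" "w b0 = MB" using a0 b0 unfolding A0_def B0_def by auto
    ultimately have "w a = MA" "w b = MB" using MAge[OF that(1)] MBge[OF that(2)] by linarith+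
    then have "a \<in> A0" "b \<in> B0" using that unfolding A0_def B0_def by auto
    then have "a \<le> a0" "b \<le> b0" using a0le b0le by auto
    show ?thesis
    proof (rule ccontr)
      assume "\<not> ?thesis"
      then have "a < a0 \<or> b < b0" using \<open>a \<le> a0\<close> \<open>b \<le> b0\<close> by auto
      then have "a + b < a0 + b0"
        using \<open>a \<le> a0\<close> \<open>b \<le> b0\<close> add_less_le_mono add_le_less_mono by blast
      then show False using that(3) by simp
    qed
  qed
  have "lk (A * B) (a0 + b0) = (\<Sum>a\<in>ks A. lk A a * (\<Sum>b\<in>ks B. (lk B b when a0 + b0 = a + b)))"
    by (rule lookup_mult_fin)
  also have "\<dots> = (\<Sum>a\<in>ks A. if a = a0 then lk A a0 * lk B b0 else 0)"
  proof (rule sum.cong[OF refl])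
    fix a assume a: "a \<in> ks A"
    have "(\<Sum>b\<in>ks B. (lk B b when a0 + b0 = a + b)) = (\<Sum>b\<in>ks B. if a = a0 \<and> b = b0 then lk B b0 else 0)"
      by (rule sum.cong[OF refl]) (use uniq a in \<open>auto simp: when_def\<close>)
    also have "\<dots> = (if a = a0 then lk B b0 else 0)" using b0 unfolding B0_def by (auto simp: sum.delta')
    finally show "lk A a * (\<Sum>b\<in>ks B. (lk B b when a0 + b0 = a + b)) = (if a = a0 then lk A a0 * lk B b0 else 0)"
      by simp
  qed
  also have "\<dots> = lk A a0 * lk B b0" using a0 unfolding A0_def by (auto simp: sum.delta')
  also have "\<dots> \<noteq> 0" using a0 b0 unfolding A0_def B0_def by (auto simp: in_keys_iff)
  finally have "a0 + b0 \<in> ks (A * B)" by (simp add: in_keys_iff)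
  then show ?thesis using a0 b0 MAge MBge unfolding A0_def B0_def by blast
qed



lemma lookup_Spoly: "lk (Spoly n) \<mu> = (\<Sum>i\<le>n. (1 when Poly_Mapping.single i 1 = \<mu>))"
  unfolding Spoly_def Xvar_def by (simp add: lookup_sum lookup_single)

lemma single1_eq_iff: "(k::nat) \<noteq> 0 \<Longrightarrow> (Poly_Mapping.single i k = Poly_Mapping.single j k) \<longleftrightarrow> i = j"
  by (metis lookup_single_eq lookup_single_not_eq)

lemma lookup_Spoly_single: "i \<le> n \<Longrightarrow> lk (Spoly n) (Poly_Mapping.single i 1) = 1"
  unfolding lookup_Spoly by (simp add: single1_eq_iff when_def)

lemma keys_Spoly: "ks (Spoly n) = (\<lambda>i. Poly_Mapping.single i 1) ` {..n}"
proof
  show "ks (Spoly n) \<subseteq> (\<lambda>i. Poly_Mapping.single i 1) ` {..n}"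
  proof
    fix \<mu> assume "\<mu> \<in> ks (Spoly n)"
    then have "(\<Sum>i\<le>n. (1::real) when Poly_Mapping.single i 1 = \<mu>) \<noteq> 0"
      by (simp add: in_keys_iff lookup_Spoly)
    then obtain i where "i \<le> n" "Poly_Mapping.single i 1 = \<mu>"
      by (metis (mono_tags, lifting) atMost_iff sum.neutral when_simps(2))
    then show "\<mu> \<in> (\<lambda>i. Poly_Mapping.single i 1) ` {..n}" by auto
  qed
  show "(\<lambda>i. Poly_Mapping.single i 1) ` {..n} \<subseteq> ks (Spoly n)"
    using lookup_Spoly_single[of _ n] by (auto simp: in_keys_iff)
qed

lemma Spoly_nz: "Spoly n \<noteq> 0"
  using keys_Spoly[of n] by auto

definition mon :: "(nat \<Rightarrow>\<^sub>0 nat) \<Rightarrow> (nat \<Rightarrow> real) \<Rightarrow> real" where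
  "mon \<mu> x = (\<Prod>i\<in>ks \<mu>. x i ^ lk \<mu> i)"

lemma mon_superset: "finite F \<Longrightarrow> ks \<mu> \<subseteq> F \<Longrightarrow> mon \<mu> x = (\<Prod>i\<in>F. x i ^ lk \<mu> i)"
  unfolding mon_def by (rule prod.mono_neutral_left) (auto simp: in_keys_iff)

lemma mon_add: "mon (a + b) x = mon a x * mon b x"
proof -
  let ?F = "ks a \<union> ks b"
  have "mon (a + b) x = (\<Prod>i\<in>?F. x i ^ lk (a+b) i)"
    using keys_add[of a b] by (intro mon_superset) auto
  also have "\<dots> = (\<Prod>i\<in>?F. x i ^ lk a i) * (\<Prod>i\<in>?F. x i ^ lk b i)"
    by (simp add: lookup_add power_add prod.distrib)
  also have "\<dots> = mon a x * mon b x" by (subst (1 2) mon_superset[of ?F]) auto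
  finally show ?thesis .
qed

lemma mon_single1: "mon (Poly_Mapping.single i 1) x = x i"
  unfolding mon_def by simp
lemma mon_single1': "mon (Poly_Mapping.single i (Suc 0)) x = x i"
  using mon_single1 by simp

lemma peval_mon: "peval A x = (\<Sum>\<mu>\<in>ks A. lk A \<mu> * mon \<mu> x)"
  unfolding peval_def mon_def ..

lemma peval_superset: "finite F \<Longrightarrow> ks A \<subseteq> F \<Longrightarrow> peval A x = (\<Sum>\<mu>\<in>F. lk A \<mu> * mon \<mu> x)"
  unfolding peval_mon by (rule sum.mono_neutral_left) (auto simp: in_keys_iff)

lemma peval_add: "peval (A + B) x = peval A x + peval B x"
proof -
  let ?F = "ks A \<union> ks B"
  have "peval (A + B) x = (\<Sum>\<mu>\<in>?F. lk (A+B) \<mu> * mon \<mu> x)"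
    using keys_add[of A B] by (intro peval_superset) auto
  also have "\<dots> = (\<Sum>\<mu>\<in>?F. lk A \<mu> * mon \<mu> x) + (\<Sum>\<mu>\<in>?F. lk B \<mu> * mon \<mu> x)"
    by (simp add: lookup_add distrib_right sum.distrib)
  also have "\<dots> = peval A x + peval B x" by (subst (1 2) peval_superset[of ?F]) auto
  finally show ?thesis .
qed

lemma peval_zero [simp]: "peval 0 x = 0" unfolding peval_def by simp

lemma peval_sum: "finite I \<Longrightarrow> peval (\<Sum>i\<in>I. f i) x = (\<Sum>i\<in>I. peval (f i) x)"
  by (induction I rule: finite_induct) (auto simp: peval_add)

lemma peval_Xvar_mult: "peval (Xvar i * R) x = x i * peval R x"
proof -
  have ks: "ks (Xvar i * R) = (\<lambda>b. Poly_Mapping.single i 1 + b) ` ks R"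
    unfolding Xvar_def by (rule keys_mult_single) simp
  have inj: "inj_on (\<lambda>b. Poly_Mapping.single i (1::nat) + b) (ks R)"
    by (auto intro: inj_onI)
  have "peval (Xvar i * R) x = (\<Sum>b\<in>ks R. lk (Xvar i * R) (Poly_Mapping.single i 1 + b) * mon (Poly_Mapping.single i 1 + b) x)"
    unfolding peval_mon ks by (simp only: sum.reindex[OF inj] comp_def)
  also have "\<dots> = (\<Sum>b\<in>ks R. x i * (lk R b * mon b x))"
    unfolding Xvar_def by (simp add: lookup_mult_single mon_add mon_single1' mult.left_commute)
  also have "\<dots> = x i * peval R x" by (simp add: peval_mon sum_distrib_left)
  finally show ?thesis .
qed

lemma peval_Spoly_mult: "peval (Spoly n * R) x = (\<Sum>i\<le>n. x i) * peval R x"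
  unfolding Spoly_def by (simp add: sum_distrib_right peval_sum peval_Xvar_mult)



definition minQ :: "mpoly \<Rightarrow> nat \<Rightarrow> nat" where
  "minQ Q i = Min ((\<lambda>b. lk b i) ` ks Q)"

lemma keys_Spoly_mult: "\<mu> \<in> ks (Spoly n * Q) \<Longrightarrow> \<exists>j\<le>n. \<exists>b\<in>ks Q. \<mu> = Poly_Mapping.single j 1 + b"
proof -
  assume "\<mu> \<in> ks (Spoly n * Q)"
  then obtain a b where "\<mu> = a + b" "a \<in> ks (Spoly n)" "b \<in> ks Q" using keys_mult[of "Spoly n" Q] by blast
  then show ?thesis unfolding keys_Spoly by blast
qed

context
  fixes n :: nat and P Q :: mpoly
  assumes n1: "n \<ge> 1" and PIn: "P \<in> In n" and Pnz: "P \<noteq> 0" and PSQ: "P = Spoly n * Q"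
begin

lemma Qnz: "Q \<noteq> 0" using Pnz PSQ by auto

lemma P_deg: "\<mu> \<in> ks P \<Longrightarrow> mdeg \<mu> = tdeg P"
proof -
  assume mu: "\<mu> \<in> ks P"
  obtain d where d: "\<forall>\<alpha>\<in>ks P. mdeg \<alpha> = d" using PIn unfolding In_def homogeneous_def by auto
  have "mdeg ` ks P = {d}" using d mu by auto
  then have "tdeg P = d" unfolding tdeg_def using mu by auto
  then show ?thesis using d mu by auto
qed

lemma P_vars: "\<mu> \<in> ks P \<Longrightarrow> j > n \<Longrightarrow> lk \<mu> j = 0"
proof -
  assume "\<mu> \<in> ks P" "j > n"
  then have "ks \<mu> \<subseteq> {..n}" using PIn unfolding In_def in_vars_def by auto
  then have "j \<notin> ks \<mu>" using \<open>j > n\<close> by auto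
  then show ?thesis by (simp add: in_keys_iff)
qed

lemma mdeg_single1: "mdeg (Poly_Mapping.single j (1::nat)) = 1" by simp

lemma Q_deg_aux: "b \<in> ks Q \<Longrightarrow> 1 + mdeg b \<ge> tdeg P \<and> 1 + mdeg b \<le> tdeg P"
proof -
  assume b: "b \<in> ks Q"
  have S: "Spoly n \<noteq> 0" by (rule Spoly_nz)
  obtain a1 b1 where a1: "a1 \<in> ks (Spoly n)" and b1: "b1 \<in> ks Q" and ab1: "a1 + b1 \<in> ks P"
    and max1: "\<forall>b'\<in>ks Q. int (mdeg b') \<le> int (mdeg b1)"
    using wmax_mult[of "\<lambda>a. int (mdeg a)" "Spoly n" Q] S Qnz PSQ by (auto simp: mdeg_add)
  obtain a2 b2 where a2: "a2 \<in> ks (Spoly n)" and b2: "b2 \<in> ks Q" and ab2: "a2 + b2 \<in> ks P"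
    and min2: "\<forall>b'\<in>ks Q. - int (mdeg b') \<le> - int (mdeg b2)"
    using wmax_mult[of "\<lambda>a. - int (mdeg a)" "Spoly n" Q] S Qnz PSQ by (auto simp: mdeg_add)
  have "mdeg a1 = 1" "mdeg a2 = 1" using a1 a2 keys_Spoly[of n] by auto
  then have "1 + mdeg b1 = tdeg P" "1 + mdeg b2 = tdeg P"
    using P_deg[OF ab1] P_deg[OF ab2] by (auto simp: mdeg_add)
  then show ?thesis using max1 min2 b by force
qed

lemma Q_deg: "b \<in> ks Q \<Longrightarrow> mdeg b = tdeg P - 1"
  using Q_deg_aux by force

lemma tdeg_pos: "tdeg P \<ge> 1"
proof -
  obtain b where "b \<in> ks Q" using Qnz by (metis ex_in_conv keys_eq_empty)
  then show ?thesis using Q_deg_aux by force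
qed

lemma Q_vars: "b \<in> ks Q \<Longrightarrow> j > n \<Longrightarrow> lk b j = 0"
proof -
  assume b: "b \<in> ks Q" and j: "j > n"
  obtain a1 b1 where a1: "a1 \<in> ks (Spoly n)" and b1: "b1 \<in> ks Q" and ab1: "a1 + b1 \<in> ks P"
    and max1: "\<forall>b'\<in>ks Q. int (lk b' j) \<le> int (lk b1 j)"
    using wmax_mult[of "\<lambda>a. int (lk a j)" "Spoly n" Q] Spoly_nz Qnz PSQ by (auto simp: lookup_add)
  have "lk b1 j = 0" using P_vars[OF ab1 j] by (simp add: lookup_add)
  then show ?thesis using max1 b by force
qed

lemma Q_keys_sub: "b \<in> ks Q \<Longrightarrow> ks b \<subseteq> {..n}"
  using Q_vars by (meson atMost_iff in_keys_iff not_le subsetI)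

lemma minQ_le: "b \<in> ks Q \<Longrightarrow> minQ Q i \<le> lk b i"
  unfolding minQ_def by auto

lemma minQ_in: "\<exists>b\<in>ks Q. lk b i = minQ Q i"
proof -
  have "minQ Q i \<in> (\<lambda>b. lk b i) ` ks Q" unfolding minQ_def using Qnz by (intro Min_in) auto
  then show ?thesis by auto
qed

lemma minP_le: "\<mu> \<in> ks P \<Longrightarrow> minQ Q i \<le> lk \<mu> i"
proof -
  assume "\<mu> \<in> ks P"
  then obtain j b where "b \<in> ks Q" "\<mu> = Poly_Mapping.single j 1 + b" using keys_Spoly_mult[of \<mu> n Q] PSQ by blast
  then show ?thesis using minQ_le[of b i] by (simp add: lookup_add)
qed

lemma minP_in: "\<exists>\<mu>\<in>ks P. lk \<mu> i = minQ Q i"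
proof -
  obtain a1 b1 where a1: "a1 \<in> ks (Spoly n)" and b1: "b1 \<in> ks Q" and ab1: "a1 + b1 \<in> ks P"
    and mina: "\<forall>a'\<in>ks (Spoly n). - int (lk a' i) \<le> - int (lk a1 i)"
    and min1: "\<forall>b'\<in>ks Q. - int (lk b' i) \<le> - int (lk b1 i)"
    using wmax_mult[of "\<lambda>a. - int (lk a i)" "Spoly n" Q] Spoly_nz Qnz PSQ by (auto simp: lookup_add)
  obtain j where j: "j \<le> n" "j \<noteq> i" using n1 by (cases "i = 0") auto
  have "Poly_Mapping.single j 1 \<in> ks (Spoly n)" using keys_Spoly[of n] j by auto
  then have "lk a1 i = 0" using mina j by (force simp: lookup_single)
  moreover have "lk b1 i = minQ Q i"
    using min1 minQ_le[OF b1, of i] minQ_in[of i] by force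
  ultimately have "lk (a1 + b1) i = minQ Q i" by (simp add: lookup_add)
  then show ?thesis using ab1 by blast
qed

end


definition gmon :: "nat \<Rightarrow> mpoly \<Rightarrow> (nat \<Rightarrow>\<^sub>0 nat)" where
  "gmon n Q = Abs_poly_mapping (\<lambda>i. if i \<le> n then minQ Q i else 0)"

lemma lk_gmon: "lk (gmon n Q) i = (if i \<le> n then minQ Q i else 0)"
proof -
  have "finite {i. (if i \<le> n then minQ Q i else 0) \<noteq> 0}"
    by (rule finite_subset[of _ "{..n}"]) (auto split: if_splits)
  then show ?thesis unfolding gmon_def by simp
qed

lemma mdeg_gmon: "mdeg (gmon n Q) = (\<Sum>i\<le>n. minQ Q i)"
  by (subst mdeg_superset[of "{..n}"]) (auto simp: in_keys_iff lk_gmon split: if_splits)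

lemma mdeg_le_pointwise:
  assumes "finite F" "ks a \<subseteq> F" "ks b \<subseteq> F" "\<And>i. i \<in> F \<Longrightarrow> lk a i \<le> lk b i"
  shows "mdeg a \<le> mdeg b"
  using assms by (simp add: mdeg_superset[of F] sum_mono)

context
  fixes n :: nat and P Q :: mpoly
  assumes n1: "n \<ge> 1" and PIn: "P \<in> In n" and Pnz: "P \<noteq> 0" and PSQ: "P = Spoly n * Q"
begin

lemmas Qnz' = Qnz[OF n1 PIn Pnz PSQ]
lemmas P_deg' = P_deg[OF n1 PIn Pnz PSQ]
lemmas P_vars' = P_vars[OF n1 PIn Pnz PSQ]
lemmas minP_le' = minP_le[OF n1 PIn Pnz PSQ]
lemmas minP_in' = minP_in[OF n1 PIn Pnz PSQ]

lemma gmon_le: "\<mu> \<in> ks P \<Longrightarrow> lk (gmon n Q) i \<le> lk \<mu> i"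
  using minP_le' by (simp add: lk_gmon)

lemma P_split: "\<mu> \<in> ks P \<Longrightarrow> \<mu> = gmon n Q + (\<mu> - gmon n Q)"
  using gmon_le by (intro poly_mapping_eqI) (simp add: lookup_add lookup_minus)

definition Rg :: mpoly where "Rg = Abs_poly_mapping (\<lambda>\<mu>. lk P (gmon n Q + \<mu>))"

lemma lk_Rg: "lk Rg \<mu> = lk P (gmon n Q + \<mu>)"
proof -
  have "{\<mu>. lk P (gmon n Q + \<mu>) \<noteq> 0} = (\<lambda>\<mu>. gmon n Q + \<mu>) -` ks P" by (auto simp: in_keys_iff)
  moreover have "finite ((\<lambda>\<mu>. gmon n Q + \<mu>) -` ks P)"
    by (rule finite_vimageI) (auto intro: injI)
  ultimately show ?thesis unfolding Rg_def by simp
qed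

lemma P_eq: "P = Xmon (gmon n Q) * Rg"
proof (rule poly_mapping_eqI)
  fix k
  show "lk P k = lk (Xmon (gmon n Q) * Rg) k"
  proof (cases "k \<in> ks P")
    case True
    then have k: "k = gmon n Q + (k - gmon n Q)" by (rule P_split)
    show ?thesis
      by (subst (1 2) k) (simp add: Xmon_def lookup_mult_single lk_Rg)
  next
    case False
    have "k \<notin> ks (Xmon (gmon n Q) * Rg)"
    proof
      assume "k \<in> ks (Xmon (gmon n Q) * Rg)"
      then obtain b where "b \<in> ks Rg" "k = gmon n Q + b"
        unfolding Xmon_def by (auto simp: keys_mult_single)
      then show False using False by (simp add: in_keys_iff lk_Rg)
    qed
    then show ?thesis using False by (simp add: in_keys_iff)
  qed
qed

lemma keys_Xmon_mult: "ks (Xmon \<alpha> * R) = (\<lambda>b. \<alpha> + b) ` ks R"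
  unfolding Xmon_def by (rule keys_mult_single) simp

lemma tdeg_of_factor:
  assumes "P = Xmon \<alpha> * R"
  shows "tdeg R = tdeg P - mdeg \<alpha>" and "mdeg \<alpha> \<le> (\<Sum>i\<le>n. minQ Q i)"
proof -
  have Rnz: "R \<noteq> 0" using assms Pnz by auto
  have kP: "ks P = (\<lambda>b. \<alpha> + b) ` ks R" using assms keys_Xmon_mult by simp
  have md: "mdeg b = tdeg P - mdeg \<alpha>" if "b \<in> ks R" for b
  proof -
    have "\<alpha> + b \<in> ks P" using kP that by auto
    then have "mdeg \<alpha> + mdeg b = tdeg P" using P_deg' mdeg_add by metis
    then show ?thesis by simp
  qed
  have "ks R \<noteq> {}" using Rnz by simp
  obtain b0 where b0: "b0 \<in> ks R" using \<open>ks R \<noteq> {}\<close> by blast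
  have "mdeg ` ks R = {tdeg P - mdeg \<alpha>}" using md b0 by (auto intro!: image_eqI[of _ _ b0])
  then show "tdeg R = tdeg P - mdeg \<alpha>" unfolding tdeg_def using \<open>ks R \<noteq> {}\<close> by simp
  have ptw: "lk \<alpha> i \<le> lk (gmon n Q) i" for i
  proof (cases "i \<le> n")
    case True
    obtain \<mu> where mu: "\<mu> \<in> ks P" "lk \<mu> i = minQ Q i" using minP_in' by blast
    then obtain b where "\<mu> = \<alpha> + b" using kP by auto
    then have "lk \<alpha> i \<le> lk \<mu> i" by (simp add: lookup_add)
    then show ?thesis using mu True by (simp add: lk_gmon)
  next
    case False
    have "\<alpha> + b0 \<in> ks P" using kP b0 by auto
    then have "lk (\<alpha> + b0) i = 0" using P_vars' False by auto
    then show ?thesis by (simp add: lookup_add)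
  qed
  have ptw': "lk \<alpha> i \<le> minQ Q i" if "i \<le> n" for i using ptw[of i] that by (simp add: lk_gmon)
  have ka: "ks \<alpha> \<subseteq> {..n}"
  proof
    fix i assume "i \<in> ks \<alpha>"
    then have "lk (gmon n Q) i \<noteq> 0" using ptw[of i] by (auto simp: in_keys_iff)
    then show "i \<in> {..n}" by (auto simp: lk_gmon split: if_splits)
  qed
  have "mdeg \<alpha> \<le> mdeg (gmon n Q)"
    by (rule mdeg_le_pointwise[of "{..n}"]) (use ka ptw' in \<open>auto simp: in_keys_iff lk_gmon split: if_splits\<close>)
  then show "mdeg \<alpha> \<le> (\<Sum>i\<le>n. minQ Q i)" by (simp add: mdeg_gmon)
qed

lemma pdeg_eq: "pdeg P = tdeg P - (\<Sum>i\<le>n. minQ Q i)"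
  unfolding pdeg_def
proof (rule Least_equality)
  show "\<exists>\<alpha> R. P = Xmon \<alpha> * R \<and> tdeg R = tdeg P - (\<Sum>i\<le>n. minQ Q i)"
    using P_eq tdeg_of_factor(1)[OF P_eq] by (auto simp: mdeg_gmon)
next
  fix y assume "\<exists>\<alpha> R. P = Xmon \<alpha> * R \<and> tdeg R = y"
  then obtain \<alpha> R where "P = Xmon \<alpha> * R" "tdeg R = y" by blast
  then show "tdeg P - (\<Sum>i\<le>n. minQ Q i) \<le> y"
    using tdeg_of_factor[of \<alpha> R] by auto
qed

end


definition mm :: "nat \<Rightarrow> (nat \<Rightarrow>\<^sub>0 nat) \<Rightarrow> (nat \<Rightarrow> nat)" where
  "mm n b = (\<lambda>j. if j \<in> {1..n} then lk b j else 0)"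

definition bm :: "nat \<Rightarrow> nat \<Rightarrow> (nat \<Rightarrow> nat) \<Rightarrow> (nat \<Rightarrow>\<^sub>0 nat)" where
  "bm n d m = Abs_poly_mapping (\<lambda>j. if j = 0 then d - 1 - absm n m else m j)"

lemma lk_bm:
  assumes "\<forall>j. j \<notin> {1..n} \<longrightarrow> m j = 0"
  shows "lk (bm n d m) j = (if j = 0 then d - 1 - absm n m else m j)"
proof -
  have "finite {j. (if j = 0 then d - 1 - absm n m else m j) \<noteq> 0}"
    by (rule finite_subset[of _ "{..n}"]) (use assms in \<open>auto split: if_splits\<close>)
  then show ?thesis unfolding bm_def by simp
qed

lemma newton_support_alt:
  "newton_support n d Q = {m. (\<forall>j. j \<notin> {1..n} \<longrightarrow> m j = 0) \<and> absm n m + 1 \<le> d \<and> bm n d m \<in> ks Q}"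
  unfolding newton_support_def bm_def by (simp add: in_keys_iff)

lemma absm_mm: "absm n (mm n b) = (\<Sum>j=1..n. lk b j)"
  unfolding absm_def mm_def by (rule sum.cong) auto

lemma mdeg_split: "ks b \<subseteq> {..n} \<Longrightarrow> mdeg b = lk b 0 + (\<Sum>j=1..n. lk b j)"
  by (simp add: mdeg_superset[of "{..n}"] atMost_atLeast0 sum.atLeast_Suc_atMost)

context
  fixes n :: nat and P Q :: mpoly
  assumes n1: "n \<ge> 1" and PIn: "P \<in> In n" and Pnz: "P \<noteq> 0" and PSQ: "P = Spoly n * Q"
begin

lemmas Q_deg' = Q_deg[OF n1 PIn Pnz PSQ]
lemmas Q_keys_sub' = Q_keys_sub[OF n1 PIn Pnz PSQ]
lemmas Q_vars' = Q_vars[OF n1 PIn Pnz PSQ]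
lemmas tdeg_pos' = tdeg_pos[OF n1 PIn Pnz PSQ]

lemma mm_key:
  assumes b: "b \<in> ks Q"
  shows "absm n (mm n b) = tdeg P - 1 - lk b 0" and "bm n (tdeg P) (mm n b) = b"
proof -
  have md: "mdeg b = lk b 0 + (\<Sum>j=1..n. lk b j)" using mdeg_split Q_keys_sub'[OF b] by blast
  show ab: "absm n (mm n b) = tdeg P - 1 - lk b 0" using md Q_deg'[OF b] by (simp add: absm_mm)
  have sup: "\<forall>j. j \<notin> {1..n} \<longrightarrow> mm n b j = 0" unfolding mm_def by auto
  show "bm n (tdeg P) (mm n b) = b"
  proof (rule poly_mapping_eqI)
    fix j
    show "lk (bm n (tdeg P) (mm n b)) j = lk b j"
    proof (cases "j = 0")
      case True
      then show ?thesis using ab md Q_deg'[OF b] by (simp add: lk_bm[OF sup])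
    next
      case False
      then have "lk (bm n (tdeg P) (mm n b)) j = mm n b j" by (simp add: lk_bm[OF sup])
      then show ?thesis using Q_vars'[OF b, of j] False by (auto simp: mm_def)
    qed
  qed
qed

lemma K_eq: "newton_support n (tdeg P) Q = mm n ` ks Q"
proof
  show "newton_support n (tdeg P) Q \<subseteq> mm n ` ks Q"
  proof
    fix m assume "m \<in> newton_support n (tdeg P) Q"
    then have m: "\<forall>j. j \<notin> {1..n} \<longrightarrow> m j = 0" "bm n (tdeg P) m \<in> ks Q"
      unfolding newton_support_alt by auto
    have "mm n (bm n (tdeg P) m) = m"
      using m(1) by (auto simp: mm_def lk_bm[OF m(1)])
    then show "m \<in> mm n ` ks Q" using m(2) by (metis image_eqI)
  qed
  show "mm n ` ks Q \<subseteq> newton_support n (tdeg P) Q"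
  proof
    fix m assume "m \<in> mm n ` ks Q"
    then obtain b where b: "b \<in> ks Q" "m = mm n b" by auto
    have "absm n m + 1 \<le> tdeg P" using mm_key(1)[OF b(1)] b(2) tdeg_pos' by simp
    moreover have "\<forall>j. j \<notin> {1..n} \<longrightarrow> m j = 0" using b(2) by (simp add: mm_def)
    ultimately show "m \<in> newton_support n (tdeg P) Q"
      unfolding newton_support_alt using mm_key(2)[OF b(1)] b by auto
  qed
qed

lemma mm_inj: "inj_on (mm n) (ks Q)"
  by (rule inj_onI) (metis mm_key(2))

end


context
  fixes n :: nat and P Q :: mpoly
  assumes n1: "n \<ge> 1" and PIn: "P \<in> In n" and Pnz: "P \<noteq> 0" and PSQ: "P = Spoly n * Q"
begin

lemma size_eq: "size_set n (newton_support n (tdeg P) Q) = int (pdeg P)"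
proof -
  let ?d = "tdeg P"
  note K = K_eq[OF n1 PIn Pnz PSQ]
  note mk = mm_key[OF n1 PIn Pnz PSQ]
  note mQle = minQ_le[OF n1 PIn Pnz PSQ]
  note mQin = minQ_in[OF n1 PIn Pnz PSQ]
  have d1: "?d \<ge> 1" by (rule tdeg_pos[OF n1 PIn Pnz PSQ])
  have img1: "absm n ` newton_support n ?d Q = (\<lambda>b. ?d - 1 - lk b 0) ` ks Q"
    unfolding K image_image using mk(1) by (intro image_cong) auto
  have max: "Max (absm n ` newton_support n ?d Q) = ?d - 1 - minQ Q 0"
    unfolding img1
  proof (rule Max_eqI)
    show "finite ((\<lambda>b. ?d - 1 - lk b 0) ` ks Q)" by simp
    show "y \<le> ?d - 1 - minQ Q 0" if "y \<in> (\<lambda>b. ?d - 1 - lk b 0) ` ks Q" for y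
      using that mQle by (auto intro: diff_le_mono2)
    obtain b where "b \<in> ks Q" "lk b 0 = minQ Q 0" using mQin by blast
    then show "?d - 1 - minQ Q 0 \<in> (\<lambda>b. ?d - 1 - lk b 0) ` ks Q" by force
  qed
  have mins: "Min ((\<lambda>m. m j) ` newton_support n ?d Q) = minQ Q j" if "j \<in> {1..n}" for j
  proof -
    have "(\<lambda>m. m j) ` newton_support n ?d Q = (\<lambda>b. lk b j) ` ks Q"
      unfolding K image_image using that by (intro image_cong) (auto simp: mm_def)
    then show ?thesis unfolding minQ_def by simp
  qed
  have sum_eq: "(\<Sum>j=1..n. Min ((\<lambda>m. m j) ` newton_support n ?d Q)) = (\<Sum>j=1..n. minQ Q j)"
    using mins by (rule sum.cong[OF refl])
  obtain b where b: "b \<in> ks Q" using Qnz[OF n1 PIn Pnz PSQ] by (metis ex_in_conv keys_eq_empty)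
  have md: "mdeg b = lk b 0 + (\<Sum>j=1..n. lk b j)"
    using mdeg_split Q_keys_sub[OF n1 PIn Pnz PSQ b] by blast
  have "(\<Sum>j=1..n. minQ Q j) \<le> (\<Sum>j=1..n. lk b j)" by (rule sum_mono) (rule mQle[OF b])
  moreover have "minQ Q 0 \<le> lk b 0" by (rule mQle[OF b])
  ultimately have bound: "minQ Q 0 + (\<Sum>j=1..n. minQ Q j) \<le> ?d - 1"
    using md Q_deg[OF n1 PIn Pnz PSQ b] by linarith
  have pd: "pdeg P = ?d - (minQ Q 0 + (\<Sum>j=1..n. minQ Q j))"
    using pdeg_eq[OF n1 PIn Pnz PSQ] by (simp add: atMost_atLeast0 sum.atLeast_Suc_atMost)
  show ?thesis
    unfolding size_set_def max sum_eq pd using bound d1 by simp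
qed

end


lemma adjacent_from_shift:
  fixes c1 c2 :: "nat \<Rightarrow>\<^sub>0 nat"
  assumes eq: "Poly_Mapping.single i 1 + c1 = Poly_Mapping.single j 1 + c2"
    and ij: "i \<le> n" "j \<le> n" and ne: "mm n c1 \<noteq> mm n c2"
  shows "adjacent n (mm n c1) (mm n c2)"
proof -
  have ineq: "i \<noteq> j" using eq ne by auto
  have pt: "int (lk c1 l) - int (lk c2 l) = (if l = j then 1 else 0) - (if l = i then 1 else 0)" for l
  proof -
    have e: "lk (Poly_Mapping.single i (1::nat)) l + lk c1 l = lk (Poly_Mapping.single j 1) l + lk c2 l"
      using eq by (metis lookup_add)
    have si: "lk (Poly_Mapping.single i (1::nat)) l = (if l = i then 1 else 0)"
      by (simp add: lookup_single when_def)
    have sj: "lk (Poly_Mapping.single j (1::nat)) l = (if l = j then 1 else 0)"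
      by (simp add: lookup_single when_def)
    show ?thesis using e unfolding si sj by (cases "l = i"; cases "l = j") simp_all
  qed
  define v where "v = (\<lambda>l. int (mm n c1 l) - int (mm n c2 l))"
  have v: "v l = (if l \<in> {1..n} then (if l = j then 1 else 0) - (if l = i then 1 else 0) else 0)" for l
    unfolding v_def mm_def using pt[of l] by auto
  have "\<exists>j'\<in>{1..n}. v = unitv j' \<or> v = - unitv j' \<or> (\<exists>k\<in>{1..n}. j' \<noteq> k \<and> v = unitv j' - unitv k)"
  proof (cases "i = 0")
    case True
    then have "j \<in> {1..n}" using ineq ij by auto
    moreover have "v = unitv j" using True \<open>j \<in> {1..n}\<close> by (auto simp: fun_eq_iff v unitv_def)
    ultimately show ?thesis by (intro bexI[of _ j] disjI1)
  next
    case False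
    then have i: "i \<in> {1..n}" using ij by auto
    show ?thesis
    proof (cases "j = 0")
      case True
      have "v = - unitv i" using True i by (auto simp: fun_eq_iff v unitv_def)
      then show ?thesis using i by (intro bexI[of _ i] disjI2 disjI1)
    next
      case False
      then have j: "j \<in> {1..n}" using ij by auto
      have "v = unitv j - unitv i" using i j by (auto simp: fun_eq_iff v unitv_def)
      then show ?thesis using i j ineq
        by (intro bexI[of _ j] disjI2 bexI[of _ i] conjI) auto
    qed
  qed
  then show ?thesis unfolding adjacent_def Let_def v_def using ne by simp
qed

context
  fixes n :: nat and P Q :: mpoly
  assumes n1: "n \<ge> 1" and PIn: "P \<in> In n" and Pnz: "P \<noteq> 0" and PSQ: "P = Spoly n * Q"
begin

lemma sub_In:
  assumes R: "ks R \<subseteq> ks Q"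
  shows "Spoly n * R \<in> In n"
proof -
  have keys: "\<exists>j\<le>n. \<exists>c\<in>ks Q. \<alpha> = Poly_Mapping.single j 1 + c" if "\<alpha> \<in> ks (Spoly n * R)" for \<alpha>
    using keys_Spoly_mult[OF that] R by blast
  have "in_vars n (Spoly n * R)"
    unfolding in_vars_def
  proof
    fix \<alpha> assume "\<alpha> \<in> ks (Spoly n * R)"
    then obtain j c where jc: "j \<le> n" "c \<in> ks Q" "\<alpha> = Poly_Mapping.single j 1 + c" using keys by blast
    have "ks \<alpha> \<subseteq> ks (Poly_Mapping.single j (1::nat)) \<union> ks c" unfolding jc(3) by (rule keys_add)
    also have "\<dots> \<subseteq> {..n}" using jc Q_keys_sub[OF n1 PIn Pnz PSQ jc(2)] by auto
    finally show "ks \<alpha> \<subseteq> {..n}" .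
  qed
  moreover have "homogeneous (Spoly n * R)"
    unfolding homogeneous_def
  proof (intro exI ballI)
    fix \<alpha> assume "\<alpha> \<in> ks (Spoly n * R)"
    then obtain j c where jc: "j \<le> n" "c \<in> ks Q" "\<alpha> = Poly_Mapping.single j 1 + c" using keys by blast
    show "mdeg \<alpha> = 1 + (tdeg P - 1)" using jc Q_deg[OF n1 PIn Pnz PSQ jc(2)] by (simp add: mdeg_add)
  qed
  moreover have "\<forall>x. (\<Sum>i\<le>n. x i) = 0 \<longrightarrow> peval (Spoly n * R) x = 0"
    by (simp add: peval_Spoly_mult)
  ultimately show ?thesis unfolding In_def by blast
qed

lemma connected_K:
  assumes ind: "indecomposable n P"
  shows "connected_set n (newton_support n (tdeg P) Q)"
  unfolding connected_set_def
proof (intro ballI)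
  let ?K = "newton_support n (tdeg P) Q"
  let ?r = "\<lambda>x y. x \<in> ?K \<and> y \<in> ?K \<and> adjacent n x y"
  fix a b assume a: "a \<in> ?K" and b: "b \<in> ?K"
  note K = K_eq[OF n1 PIn Pnz PSQ]
  show "?r\<^sup>*\<^sup>* a b"
  proof (rule ccontr)
    assume nab: "\<not> ?r\<^sup>*\<^sup>* a b"
    define C where "C = {x. ?r\<^sup>*\<^sup>* a x}"
    define Q1 where "Q1 = Abs_poly_mapping (\<lambda>\<mu>. if mm n \<mu> \<in> C then lk Q \<mu> else 0)"
    have lk1: "lk Q1 \<mu> = (if mm n \<mu> \<in> C then lk Q \<mu> else 0)" for \<mu>
    proof -
      have "finite {\<mu>. (if mm n \<mu> \<in> C then lk Q \<mu> else 0) \<noteq> 0}"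
        by (rule finite_subset[of _ "ks Q"]) (auto simp: in_keys_iff split: if_splits)
      then show ?thesis unfolding Q1_def by simp
    qed
    define Q2 where "Q2 = Q - Q1"
    have lk2: "lk Q2 \<mu> = (if mm n \<mu> \<in> C then 0 else lk Q \<mu>)" for \<mu>
      unfolding Q2_def by (simp add: lookup_minus lk1)
    have QQ: "Q = Q1 + Q2" unfolding Q2_def by simp
    have ks1: "ks Q1 \<subseteq> ks Q" and ks2: "ks Q2 \<subseteq> ks Q"
      by (auto simp: in_keys_iff lk1 lk2 split: if_splits)
    obtain ba where ba: "ba \<in> ks Q" "a = mm n ba" using a K by auto
    obtain bb where bb: "bb \<in> ks Q" "b = mm n bb" using b K by auto
    have "a \<in> C" unfolding C_def by simp
    then have "lk Q1 ba \<noteq> 0" using ba by (simp add: lk1 in_keys_iff)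
    then have Q1nz: "Q1 \<noteq> 0" by auto
    have "b \<notin> C" unfolding C_def using nab by simp
    then have "lk Q2 bb \<noteq> 0" using bb by (simp add: lk2 in_keys_iff)
    then have Q2nz: "Q2 \<noteq> 0" by auto
    define P1 where "P1 = Spoly n * Q1"
    define P2 where "P2 = Spoly n * Q2"
    have P12: "P = P1 + P2" unfolding P1_def P2_def PSQ by (subst QQ) (simp add: distrib_left)
    have P1In: "P1 \<in> In n" unfolding P1_def by (rule sub_In[OF ks1])
    have P2In: "P2 \<in> In n" unfolding P2_def by (rule sub_In[OF ks2])
    have P1nz: "P1 \<noteq> 0" unfolding P1_def using Q1nz Spoly_nz by simp
    have P2nz: "P2 \<noteq> 0" unfolding P2_def using Q2nz Spoly_nz by simp
    have disj: "ks P1 \<inter> ks P2 = {}"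
    proof (rule ccontr)
      assume "ks P1 \<inter> ks P2 \<noteq> {}"
      then obtain \<mu> where mu1: "\<mu> \<in> ks P1" and mu2: "\<mu> \<in> ks P2" by blast
      obtain i c1 where c1: "i \<le> n" "c1 \<in> ks Q1" "\<mu> = Poly_Mapping.single i 1 + c1"
        using keys_Spoly_mult[of \<mu> n Q1] mu1 unfolding P1_def by blast
      obtain j c2 where c2: "j \<le> n" "c2 \<in> ks Q2" "\<mu> = Poly_Mapping.single j 1 + c2"
        using keys_Spoly_mult[of \<mu> n Q2] mu2 unfolding P2_def by blast
      have inC: "mm n c1 \<in> C" using c1(2) by (auto simp: in_keys_iff lk1 split: if_splits)
      have ninC: "mm n c2 \<notin> C" using c2(2) by (auto simp: in_keys_iff lk2 split: if_splits)
      have "c1 \<in> ks Q" "c2 \<in> ks Q" using c1(2) c2(2) ks1 ks2 by auto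
      then have inK: "mm n c1 \<in> ?K" "mm n c2 \<in> ?K" using K by auto
      have ne: "mm n c1 \<noteq> mm n c2" using inC ninC by auto
      have "adjacent n (mm n c1) (mm n c2)"
        using adjacent_from_shift[of i c1 j c2 n] c1 c2 ne by simp
      then have "?r (mm n c1) (mm n c2)" using inK by simp
      then have "mm n c2 \<in> C" using inC unfolding C_def by (simp add: rtranclp.rtrancl_into_rtrancl)
      then show False using ninC by simp
    qed
    have "\<exists>P1 P2. P1 \<in> In n \<and> P2 \<in> In n \<and> P1 \<noteq> 0 \<and> P2 \<noteq> 0 \<and>
              ks P1 \<inter> ks P2 = {} \<and> P = P1 + P2"
      by (intro exI[of _ P1] exI[of _ P2]) (simp only: P1In P2In P1nz P2nz disj P12 simp_thms)
    then show False using ind unfolding indecomposable_def by simp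
  qed
qed

end

theorem mainTheorem12:
  fixes n :: nat and P Q :: mpoly
  assumes "n \<ge> 1"
    and "P \<in> In n" and "P \<noteq> 0"
    and "P = Spoly n * Q"
  shows "(indecomposable n P \<longrightarrow> connected_set n (newton_support n (tdeg P) Q))
       \<and> size_set n (newton_support n (tdeg P) Q) = int (pdeg P)"
  using connected_K[OF assms] size_eq[OF assms] by blast

end
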